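(* Let $A$ be the random matrix defined in the context. If $D/(k\log k)\to\infty$, then with probability $1-o(1)$, $\kappa(A)\ge\Omega(\sqrt k)$. If $D/(k^2\log k)\to\infty$, then with probability $1-o(1)$, $\lambda(A)\le 2$.
   Context: Random instance: let $S_1,\dots,S_k\subseteq[D]$ be independent uniformly random subsets of $[D]$ (each element included independently with probability $1/2$), and let $A\in\mathbb{R}^{D\times k}$ have $A_{ij}=1/|S_j|$ if $i\in S_j$ and $A_{ij}=0$ otherwise. The $\ell_\infty\to\ell_1$ condition number $\lambda(A)$ is the smallest $\lambda$ such that $\|Ax\|_1\ge\|x\|_\infty/\lambda$ for all $x\in\mathbb{R}^k$. The $\ell_1$-condition number $\kappa(A)$ is the smallest $\kappa$ such that $\|Ax\|_1\ge\|x\|_1/\kappa$ for all $x\in\mathbb{R}^k$. Asymptotics are as $k\to\infty$. *)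

theory Defs
  imports "HOL-Probability.Probability"
begin

text \<open>Indices are 0-based: [D] = {..<D}, columns j \<in> {..<k}.
  A random instance is a tuple S of k subsets of {..<D}, drawn uniformly
  (equivalently: each element included independently with probability 1/2).\<close>

definition rand_sets :: "nat \<Rightarrow> nat \<Rightarrow> (nat \<Rightarrow> nat set) pmf" where
  "rand_sets D k = pmf_of_set (PiE {..<k} (\<lambda>_. Pow {..<D}))"

definition matA :: "(nat \<Rightarrow> nat set) \<Rightarrow> nat \<Rightarrow> nat \<Rightarrow> real" where
  "matA S i j = (if i \<in> S j then 1 / real (card (S j)) else 0)"

definition l1_k :: "nat \<Rightarrow> (nat \<Rightarrow> real) \<Rightarrow> real" where
  "l1_k k x = (\<Sum>j<k. \<bar>x j\<bar>)"

definition linf_k :: "nat \<Rightarrow> (nat \<Rightarrow> real) \<Rightarrow> real" where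
  "linf_k k x = Max (insert 0 ((\<lambda>j. \<bar>x j\<bar>) ` {..<k}))"

definition Ax_l1 :: "nat \<Rightarrow> nat \<Rightarrow> (nat \<Rightarrow> nat set) \<Rightarrow> (nat \<Rightarrow> real) \<Rightarrow> real" where
  "Ax_l1 D k S x = (\<Sum>i<D. \<bar>\<Sum>j<k. matA S i j * x j\<bar>)"

text \<open>Condition numbers: the smallest admissible constant (as extended real;
  infinite if no finite constant works).\<close>
definition kappa :: "nat \<Rightarrow> nat \<Rightarrow> (nat \<Rightarrow> nat set) \<Rightarrow> ereal" where
  "kappa D k S = Inf {c :: ereal. c > 0 \<and>
     (\<forall>x. ereal (l1_k k x) \<le> c * ereal (Ax_l1 D k S x))}"

definition lambda_cn :: "nat \<Rightarrow> nat \<Rightarrow> (nat \<Rightarrow> nat set) \<Rightarrow> ereal" where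
  "lambda_cn D k S = Inf {c :: ereal. c > 0 \<and>
     (\<forall>x. ereal (linf_k k x) \<le> c * ereal (Ax_l1 D k S x))}"

end

theory Submission
  imports Defs "HOL-Probability.Probability"
begin

definition Rk :: "nat \<Rightarrow> (nat \<Rightarrow> bool) pmf" where
  "Rk k = Pi_pmf {..<k} False (\<lambda>_. bernoulli_pmf (1/2))"
definition Bm :: "nat \<Rightarrow> nat \<Rightarrow> (nat \<Rightarrow> nat \<Rightarrow> bool) pmf" where
  "Bm D k = Pi_pmf {..<D} (\<lambda>_. False) (\<lambda>_. Rk k)"
definition Fm :: "nat \<Rightarrow> nat \<Rightarrow> (nat \<Rightarrow> nat \<Rightarrow> bool) \<Rightarrow> nat \<Rightarrow> nat set" where
  "Fm D k w = (\<lambda>j. if j < k then {i. i < D \<and> w i j} else undefined)"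

lemma Rk_eq: "Rk k = pmf_of_set (PiE_dflt {..<k} False (\<lambda>_. UNIV))"
  unfolding Rk_def by (simp add: bernoulli_pmf_half_conv_pmf_of_set Pi_pmf_of_set)

lemma Bm_eq: "Bm D k = pmf_of_set (PiE_dflt {..<D} (\<lambda>_. False) (\<lambda>_. PiE_dflt {..<k} False (\<lambda>_. UNIV)))"
  unfolding Bm_def Rk_eq
  by (rule Pi_pmf_of_set) (auto simp: PiE_dflt_empty_iff)

lemma bij_Fm: "bij_betw (Fm D k) (PiE_dflt {..<D} (\<lambda>_. False) (\<lambda>_. PiE_dflt {..<k} False (\<lambda>_. UNIV)))
   (PiE {..<k} (\<lambda>_. Pow {..<D}))"
proof (rule bij_betwI[where g = "\<lambda>S i j. i < D \<and> j < k \<and> i \<in> S j"])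
  show "Fm D k \<in> PiE_dflt {..<D} (\<lambda>_. False) (\<lambda>_. PiE_dflt {..<k} False (\<lambda>_. UNIV)) \<rightarrow> PiE {..<k} (\<lambda>_. Pow {..<D})"
    by (auto simp: Fm_def PiE_dflt_def)
  show "(\<lambda>S i j. i < D \<and> j < k \<and> i \<in> S j) \<in> PiE {..<k} (\<lambda>_. Pow {..<D}) \<rightarrow> PiE_dflt {..<D} (\<lambda>_. False) (\<lambda>_. PiE_dflt {..<k} False (\<lambda>_. UNIV))"
    by (auto simp: PiE_dflt_def)
  fix w assume "w \<in> PiE_dflt {..<D} (\<lambda>_. False) (\<lambda>_. PiE_dflt {..<k} False (\<lambda>_. UNIV))"
  then show "(\<lambda>i j. i < D \<and> j < k \<and> i \<in> Fm D k w j) = w"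
    by (auto simp: PiE_dflt_def Fm_def fun_eq_iff)
next
  fix S assume S: "S \<in> PiE {..<k} (\<lambda>_. Pow {..<D})"
  show "Fm D k (\<lambda>i j. i < D \<and> j < k \<and> i \<in> S j) = S"
  proof
    fix j show "Fm D k (\<lambda>i j. i < D \<and> j < k \<and> i \<in> S j) j = S j"
      using S by (cases "j < k") (auto simp: Fm_def PiE_def extensional_def)
  qed
qed

lemma rand_sets_eq: "rand_sets D k = map_pmf (Fm D k) (Bm D k)"
  unfolding Bm_eq rand_sets_def
  by (rule map_pmf_of_set_bij_betw[symmetric, OF bij_Fm]) (auto simp: PiE_dflt_empty_iff intro!: finite_PiE_dflt)

lemma prob_rand_sets: "measure_pmf.prob (rand_sets D k) {S. P S} = measure_pmf.prob (Bm D k) {w. P (Fm D k w)}"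
  by (simp add: rand_sets_eq vimage_def)


lemma exp_comp: "i < D \<Longrightarrow> measure_pmf.expectation (Bm D k) (\<lambda>w. f (w i)) = measure_pmf.expectation (Rk k) (f::_\<Rightarrow>real)"
proof -
  assume i: "i < D"
  have "measure_pmf.expectation (Bm D k) (\<lambda>w. f (w i)) = measure_pmf.expectation (map_pmf (\<lambda>w. w i) (Bm D k)) f"
    by simp
  also have "map_pmf (\<lambda>w. w i) (Bm D k) = Rk k" unfolding Bm_def
    using i by (subst Pi_pmf_component) auto
  finally show ?thesis .
qed

lemma hoeff:
  fixes f :: "(nat \<Rightarrow> bool) \<Rightarrow> real"
  assumes fab: "\<And>r. f r \<in> {a..b}" and ab: "a < b" and D: "D > 0" and t: "t \<ge> 0"
  shows "measure_pmf.prob (Bm D k) {w. \<bar>(\<Sum>i<D. f (w i)) - real D * measure_pmf.expectation (Rk k) f\<bar> \<ge> t}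
    \<le> 2 * exp (-2 * t\<^sup>2 / (real D * (b - a)\<^sup>2))"
proof -
  interpret H: Hoeffding_ineq "measure_pmf (Bm D k)" "{..<D}" "\<lambda>i w. f (w i)" "\<lambda>_. a" "\<lambda>_. b"
     "\<Sum>i<D. measure_pmf.expectation (Bm D k) (\<lambda>w. f (w i))"
  proof unfold_locales
    show "prob_space.indep_vars (measure_pmf (Bm D k)) (\<lambda>_. borel) (\<lambda>i w. f (w i)) {..<D}"
      unfolding Bm_def
      by (rule prob_space.indep_vars_compose2[OF measure_pmf.prob_space_axioms indep_vars_Pi_pmf]) auto
  qed (use fab in auto)
  have mu: "(\<Sum>i<D. measure_pmf.expectation (Bm D k) (\<lambda>w. f (w i))) = real D * measure_pmf.expectation (Rk k) f"
    by (simp add: exp_comp)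
  have "(\<Sum>i<D. (b - a)\<^sup>2) > 0" using ab D by simp
  from H.Hoeffding_ineq_abs_ge[OF t this]
  show ?thesis by (simp add: mu)
qed


lemma fin_Rk: "finite (set_pmf (Rk k))"
  unfolding Rk_eq by (subst set_pmf_of_set) (auto simp: PiE_dflt_empty_iff intro!: finite_PiE_dflt)

lemma int_Rk: "integrable (measure_pmf (Rk k)) (f :: _ \<Rightarrow> real)"
  by (rule integrable_measure_pmf_finite[OF fin_Rk])

lemma E1: "j < k \<Longrightarrow> measure_pmf.expectation (Rk k) (\<lambda>r. of_bool (r j)) = (1/2 :: real)"
proof -
  assume j: "j < k"
  have "measure_pmf.expectation (Rk k) (\<lambda>r. of_bool (r j)) = measure_pmf.expectation (map_pmf (\<lambda>r. r j) (Rk k)) (\<lambda>b. of_bool b :: real)"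
    by simp
  also have "map_pmf (\<lambda>r. r j) (Rk k) = bernoulli_pmf (1/2)" unfolding Rk_def
    using j by (subst Pi_pmf_component) auto
  finally show ?thesis by simp
qed

lemma E11: assumes "j < k" "l < k" "j \<noteq> l"
  shows "measure_pmf.expectation (Rk k) (\<lambda>r. of_bool (r j) * of_bool (r l)) = (1/4 :: real)"
proof -
  define g where "g = (\<lambda>x (v::bool). if x = j \<or> x = l then of_bool v else (1::real))"
  have eq: "(\<lambda>r. of_bool (r j) * of_bool (r l)) = (\<lambda>r. \<Prod>x\<in>{..<k}. g x (r x))"
  proof
    fix r :: "nat \<Rightarrow> bool"
    have "(\<Prod>x\<in>{..<k}. g x (r x)) = (\<Prod>x\<in>{..<k} \<inter> {x. x = j \<or> x = l}. of_bool (r x)) * (\<Prod>x\<in>{..<k} \<inter> - {x. x = j \<or> x = l}. 1)"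
      unfolding g_def by (rule prod.If_cases) simp
    also have "{..<k} \<inter> {x. x = j \<or> x = l} = {j, l}" using assms by auto
    finally show "of_bool (r j) * of_bool (r l) = (\<Prod>x\<in>{..<k}. g x (r x))" using assms by simp
  qed
  have "measure_pmf.expectation (Rk k) (\<lambda>r. \<Prod>x\<in>{..<k}. g x (r x))
     = (\<Prod>x\<in>{..<k}. measure_pmf.expectation (bernoulli_pmf (1/2)) (g x))"
    unfolding Rk_def by (rule expectation_prod_Pi_pmf) (auto simp: g_def integrable_measure_pmf_finite)
  also have "\<dots> = (\<Prod>x\<in>{..<k}. if x = j \<or> x = l then 1/2 else 1)"
    by (rule prod.cong) (auto simp: g_def)
  also have "\<dots> = (\<Prod>x\<in>{..<k} \<inter> {x. x = j \<or> x = l}. 1/2) * (\<Prod>x\<in>{..<k} \<inter> - {x. x = j \<or> x = l}. 1)"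
    by (rule prod.If_cases) simp
  also have "{..<k} \<inter> {x. x = j \<or> x = l} = {j, l}" using assms by auto
  finally show ?thesis using assms by (simp add: eq)
qed

lemma E2: assumes "j < k" "l < k" "j \<noteq> l"
  shows "measure_pmf.expectation (Rk k) (\<lambda>r. of_bool (r j) * (2 * of_bool (r l) - 1)) = (0 :: real)"
proof -
  have "(\<lambda>r. of_bool (r j) * (2 * of_bool (r l) - 1)) = (\<lambda>r. 2 * (of_bool (r j) * of_bool (r l)) - (of_bool (r j) :: real))"
    by (auto simp: fun_eq_iff algebra_simps)
  then show ?thesis
    using E1[OF assms(1)] E11[OF assms] by (simp add: int_Rk)
qed


definition Sg :: "nat \<Rightarrow> (nat \<Rightarrow> real) set" where
  "Sg k = PiE {..<k} (\<lambda>_. {-1, 1})"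

lemma Sg_finite: "finite (Sg k)" unfolding Sg_def by (auto intro!: finite_PiE)
lemma Sg_ne: "Sg k \<noteq> {}" unfolding Sg_def by (auto simp: PiE_eq_empty_iff)

lemma Sg_sq: "e \<in> Sg k \<Longrightarrow> j < k \<Longrightarrow> e j * e j = 1"
  unfolding Sg_def by (auto simp: PiE_def Pi_def)

lemma Sg_abs: "e \<in> Sg k \<Longrightarrow> j < k \<Longrightarrow> \<bar>e j\<bar> = 1"
  unfolding Sg_def by (auto simp: PiE_def Pi_def)

lemma Sg_cross: assumes "j < k" "l < k" "j \<noteq> l"
  shows "(\<Sum>e\<in>Sg k. e j * e l) = 0"
proof -
  define \<sigma> where "\<sigma> = (\<lambda>e::nat\<Rightarrow>real. e(j := - e j))"
  have mem: "\<sigma> e \<in> Sg k" if "e \<in> Sg k" for e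
    using that assms(1) unfolding Sg_def \<sigma>_def by (auto simp: PiE_def Pi_def extensional_def)
  have inv: "\<sigma> (\<sigma> e) = e" for e unfolding \<sigma>_def by auto
  have "(\<Sum>e\<in>Sg k. e j * e l) = (\<Sum>e\<in>Sg k. \<sigma> e j * \<sigma> e l)"
    by (rule sum.reindex_bij_witness[where i = \<sigma> and j = \<sigma>]) (auto simp: inv mem)
  also have "\<dots> = - (\<Sum>e\<in>Sg k. e j * e l)"
    using assms(3) by (simp add: \<sigma>_def sum_negf)
  finally show ?thesis by simp
qed

lemma Sg_sum_sq:
  fixes a :: "nat \<Rightarrow> real"
  shows "(\<Sum>e\<in>Sg k. (\<Sum>j<k. a j * e j)\<^sup>2) = real (card (Sg k)) * (\<Sum>j<k. (a j)\<^sup>2)"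
proof -
  have "(\<Sum>e\<in>Sg k. (\<Sum>j<k. a j * e j)\<^sup>2) = (\<Sum>e\<in>Sg k. \<Sum>j<k. \<Sum>l<k. a j * a l * (e j * e l))"
    by (simp add: power2_eq_square sum_product mult_ac)
  also have "\<dots> = (\<Sum>j<k. \<Sum>l<k. a j * a l * (\<Sum>e\<in>Sg k. e j * e l))"
    by (simp add: sum.swap[of _ "Sg k"] sum_distrib_left)
  also have "\<dots> = (\<Sum>j<k. \<Sum>l<k. if l = j then a j * a j * real (card (Sg k)) else 0)"
  proof (intro sum.cong refl)
    fix j l assume "j \<in> {..<k}" "l \<in> {..<k}"
    then show "a j * a l * (\<Sum>e\<in>Sg k. e j * e l) = (if l = j then a j * a j * real (card (Sg k)) else 0)"
      using Sg_cross[of j k l] Sg_sq[of _ k j] by (auto)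
  qed
  also have "\<dots> = real (card (Sg k)) * (\<Sum>j<k. (a j)\<^sup>2)"
    by (simp add: sum_distrib_left power2_eq_square mult_ac)
  finally show ?thesis .
qed

lemma Sg_khin:
  fixes a :: "nat \<Rightarrow> real"
  shows "(\<Sum>e\<in>Sg k. \<bar>\<Sum>j<k. a j * e j\<bar>) \<le> real (card (Sg k)) * sqrt (\<Sum>j<k. (a j)\<^sup>2)"
proof -
  have "(\<Sum>e\<in>Sg k. \<bar>\<Sum>j<k. a j * e j\<bar>)\<^sup>2 \<le> (\<Sum>e\<in>Sg k. \<bar>\<Sum>j<k. a j * e j\<bar>\<^sup>2) * card (Sg k)"
    by (rule sum_squared_le_sum_of_squares)
  also have "\<dots> = (\<Sum>e\<in>Sg k. (\<Sum>j<k. a j * e j)\<^sup>2) * card (Sg k)"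
    by simp
  also have "\<dots> = (real (card (Sg k)) * sqrt (\<Sum>j<k. (a j)\<^sup>2))\<^sup>2"
    unfolding Sg_sum_sq power_mult_distrib by (simp add: sum_nonneg power2_eq_square)
  finally show ?thesis
    by (rule power2_le_imp_le) (simp add: sum_nonneg)
qed

lemma sum_sqrt_le:
  fixes q :: "nat \<Rightarrow> real"
  assumes "\<And>i. q i \<ge> 0"
  shows "(\<Sum>i<D. sqrt (q i)) \<le> sqrt (real D * (\<Sum>i<D. q i))"
proof -
  have "(\<Sum>i<D. sqrt (q i))\<^sup>2 \<le> (\<Sum>i<D. (sqrt (q i))\<^sup>2) * card {..<D}"
    by (rule sum_squared_le_sum_of_squares)
  also have "\<dots> = real D * (\<Sum>i<D. q i)" using assms by simp
  finally show ?thesis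
    by (intro real_le_rsqrt) 
qed


lemma sum_ind_card: "(S::nat set) \<subseteq> {..<D} \<Longrightarrow> (\<Sum>i<D. (of_bool (i \<in> S) :: real)) = real (card S)"
proof -
  assume S: "S \<subseteq> {..<D}"
  have "(\<Sum>i<D. (of_bool (i \<in> S) :: real)) = (\<Sum>i\<in>{..<D} \<inter> S. 1)"
    by (subst sum.inter_restrict) (auto simp: of_bool_def intro: finite_lessThan)
  also have "\<dots> = real (card ({..<D} \<inter> S))" by simp
  also have "{..<D} \<inter> S = S" using S by auto
  finally show ?thesis .
qed

lemma detK:
  assumes k: "k > 0" and D: "D > 0"
    and S: "\<And>j. j < k \<Longrightarrow> S j \<subseteq> {..<D} \<and> real (card (S j)) \<ge> real D / 4"
  shows "kappa D k S \<ge> ereal (1/2 * sqrt (real k))"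
proof -
  define q where "q i = (\<Sum>j<k. (matA S i j)\<^sup>2)" for i
  have q0: "q i \<ge> 0" for i unfolding q_def by (simp add: sum_nonneg)
  have cpos: "real (card (S j)) > 0" if "j < k" for j
    using S[OF that] D by (smt (verit) divide_pos_pos of_nat_0_less_iff)
  have colsum: "(\<Sum>i<D. (matA S i j)\<^sup>2) = 1 / real (card (S j))" if j: "j < k" for j
  proof -
    have "(\<Sum>i<D. (matA S i j)\<^sup>2) = (\<Sum>i<D. of_bool (i \<in> S j) * (1 / real (card (S j)))\<^sup>2)"
      by (intro sum.cong) (auto simp: matA_def)
    also have "\<dots> = real (card (S j)) * (1 / real (card (S j)))\<^sup>2"
      using sum_ind_card[of "S j" D] S[OF j] by (simp only: sum_distrib_right[symmetric])
    also have "\<dots> = 1 / real (card (S j))" using cpos[OF j] by (simp add: power2_eq_square)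
    finally show ?thesis .
  qed
  have "(\<Sum>i<D. q i) = (\<Sum>j<k. 1 / real (card (S j)))"
    unfolding q_def by (subst sum.swap) (simp add: colsum)
  also have "\<dots> \<le> (\<Sum>j<k. 4 / real D)"
  proof (intro sum_mono)
    fix j assume "j \<in> {..<k}"
    then have "real D / 4 \<le> real (card (S j))" using S by auto
    then show "1 / real (card (S j)) \<le> 4 / real D" using D
      by (simp add: divide_simps)
  qed
  also have "\<dots> = 4 * real k / real D" by simp
  finally have sq: "(\<Sum>i<D. q i) \<le> 4 * real k / real D" .
  have "(\<Sum>i<D. sqrt (q i)) \<le> sqrt (real D * (\<Sum>i<D. q i))"
    by (rule sum_sqrt_le[OF q0])
  also have "\<dots> \<le> sqrt (real D * (4 * real k / real D))"
    using sq D by (intro real_sqrt_le_mono mult_left_mono) auto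
  also have "\<dots> = 2 * sqrt (real k)" using D by (simp add: real_sqrt_mult)
  finally have sqb: "(\<Sum>i<D. sqrt (q i)) \<le> 2 * sqrt (real k)" .
  have "(\<Sum>e\<in>Sg k. Ax_l1 D k S e) = (\<Sum>i<D. \<Sum>e\<in>Sg k. \<bar>\<Sum>j<k. matA S i j * e j\<bar>)"
    unfolding Ax_l1_def by (rule sum.swap)
  also have "\<dots> \<le> (\<Sum>i<D. real (card (Sg k)) * sqrt (q i))"
    unfolding q_def by (intro sum_mono Sg_khin)
  also have "\<dots> \<le> real (card (Sg k)) * (2 * sqrt (real k))"
    using sqb by (simp add: sum_distrib_left[symmetric] mult_left_mono)
  finally have tot: "(\<Sum>e\<in>Sg k. Ax_l1 D k S e) \<le> real (card (Sg k)) * (2 * sqrt (real k))" .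
  obtain e where e: "e \<in> Sg k" "Ax_l1 D k S e \<le> 2 * sqrt (real k)"
  proof (rule ccontr)
    assume "\<not> thesis"
    then have "\<forall>e\<in>Sg k. 2 * sqrt (real k) < Ax_l1 D k S e" using that by force
    then have "(\<Sum>e\<in>Sg k. 2 * sqrt (real k)) < (\<Sum>e\<in>Sg k. Ax_l1 D k S e)"
      by (intro sum_strict_mono Sg_finite Sg_ne) auto
    then show False using tot by simp
  qed
  have l1e: "l1_k k e = real k"
    unfolding l1_k_def using Sg_abs[OF e(1)] by simp
  have sk: "sqrt (real k) > 0" using k by simp
  show ?thesis
    unfolding kappa_def
  proof (rule Inf_greatest, clarify)
    fix c :: ereal
    assume c: "c > 0" "\<forall>x. ereal (l1_k k x) \<le> c * ereal (Ax_l1 D k S x)"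
    then have ce: "ereal (real k) \<le> c * ereal (Ax_l1 D k S e)" using l1e by metis
    show "ereal (1/2 * sqrt (real k)) \<le> c"
    proof (cases c)
      case (real r)
      with ce have "real k \<le> r * Ax_l1 D k S e" by simp
      also have "\<dots> \<le> r * (2 * sqrt (real k))"
        using e(2) c(1) real by (intro mult_left_mono) auto
      finally have h1: "real k \<le> r * (2 * sqrt (real k))" .
      have h2: "real k = sqrt (real k) * sqrt (real k)" by simp
      have "sqrt (real k) * sqrt (real k) \<le> (2 * r) * sqrt (real k)"
        using h1 h2 by (simp only: mult_ac)
      then have "sqrt (real k) \<le> 2 * r" using sk by (rule mult_right_le_imp_le)
      then show ?thesis using real by simp
    qed (use c in auto)
  qed
qed


lemma linf_attained:
  assumes "k > 0"
  obtains l where "l < k" "linf_k k x = \<bar>x l\<bar>" "\<And>j. j < k \<Longrightarrow> \<bar>x j\<bar> \<le> \<bar>x l\<bar>"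
proof -
  define M where "M = (\<lambda>j. \<bar>x j\<bar>) ` {..<k}"
  have fin: "finite M" and ne: "M \<noteq> {}" using assms by (auto simp: M_def)
  obtain l where l: "l < k" "Max M = \<bar>x l\<bar>" using Max_in[OF fin ne] by (auto simp: M_def)
  have ge: "\<bar>x j\<bar> \<le> \<bar>x l\<bar>" if "j < k" for j
  proof -
    have "\<bar>x j\<bar> \<in> M" using that by (auto simp: M_def)
    from Max_ge[OF fin this] show ?thesis using l(2) by simp
  qed
  have "linf_k k x = max 0 (Max M)" unfolding linf_k_def M_def[symmetric]
    using fin ne by (simp add: Max_insert)
  also have "\<dots> = \<bar>x l\<bar>" using l by simp
  finally show ?thesis using that l ge by blast
qed

lemma detL:
  assumes k: "k > 0" and D: "D > 0"
    and S: "\<And>j. j < k \<Longrightarrow> S j \<subseteq> {..<D} \<and> real (card (S j)) \<ge> real D / 4"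
    and Z: "\<And>j l. j < k \<Longrightarrow> l < k \<Longrightarrow> j \<noteq> l \<Longrightarrow>
       \<bar>\<Sum>i<D. of_bool (i \<in> S j) * (2 * of_bool (i \<in> S l) - 1)\<bar> \<le> real D / (8 * real k)"
  shows "lambda_cn D k S \<le> 2"
proof -
  have cpos: "real (card (S j)) > 0" if "j < k" for j
    using S[OF that] D by (smt (verit) divide_pos_pos of_nat_0_less_iff)
  have key: "linf_k k x \<le> 2 * Ax_l1 D k S x" for x
  proof -
    obtain l where l: "l < k" "linf_k k x = \<bar>x l\<bar>" "\<And>j. j < k \<Longrightarrow> \<bar>x j\<bar> \<le> \<bar>x l\<bar>"
      using linf_attained[OF k] by blast
    define s where "s i = 2 * of_bool (i \<in> S l) - (1::real)" for i
    define y where "y i = (\<Sum>j<k. matA S i j * x j)" for i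
    define c where "c j = (\<Sum>i<D. s i * matA S i j)" for j
    have cj: "c j = (\<Sum>i<D. of_bool (i \<in> S j) * s i) / real (card (S j))" for j
    proof -
      have "c j = (\<Sum>i<D. of_bool (i \<in> S j) * s i / real (card (S j)))"
        unfolding c_def by (intro sum.cong) (auto simp: matA_def)
      then show ?thesis by (simp only: sum_divide_distrib)
    qed
    have cl: "c l = 1"
    proof -
      have "(\<Sum>i<D. of_bool (i \<in> S l) * s i) = (\<Sum>i<D. of_bool (i \<in> S l))"
        by (intro sum.cong) (auto simp: s_def)
      also have "\<dots> = real (card (S l))" using S[OF l(1)] sum_ind_card by blast
      finally show ?thesis using cj[of l] cpos[OF l(1)] by simp
    qed
    have csmall: "\<bar>c j\<bar> \<le> 1 / (2 * real k)" if j: "j < k" "j \<noteq> l" for j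
    proof -
      have num: "\<bar>\<Sum>i<D. of_bool (i \<in> S j) * s i\<bar> \<le> real D / (8 * real k)"
        using Z[OF j(1) l(1) j(2)] by (simp add: s_def)
      have "\<bar>c j\<bar> = \<bar>\<Sum>i<D. of_bool (i \<in> S j) * s i\<bar> / real (card (S j))"
        using cj[of j] cpos[OF j(1)] by simp
      also have "\<dots> \<le> (real D / (8 * real k)) / real (card (S j))"
        using num cpos[OF j(1)] by (intro divide_right_mono) auto
      also have "\<dots> \<le> (real D / (8 * real k)) / (real D / 4)"
        using S[OF j(1)] D k by (intro divide_left_mono) auto
      also have "\<dots> = 1 / (2 * real k)" using D by (simp add: field_simps)
      finally show ?thesis .
    qed
    have swap: "(\<Sum>i<D. s i * y i) = (\<Sum>j<k. x j * c j)"
      unfolding y_def c_def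
      by (simp add: sum_distrib_left sum_distrib_right mult_ac sum.swap[of _ "{..<D}"])
    have split: "(\<Sum>j<k. x j * c j) = x l * c l + (\<Sum>j\<in>{..<k} - {l}. x j * c j)"
      using l(1) by (subst sum.remove[of _ l]) auto
    have rest: "\<bar>\<Sum>j\<in>{..<k} - {l}. x j * c j\<bar> \<le> \<bar>x l\<bar> / 2"
    proof -
      have "\<bar>\<Sum>j\<in>{..<k} - {l}. x j * c j\<bar> \<le> (\<Sum>j\<in>{..<k} - {l}. \<bar>x j * c j\<bar>)"
        by (rule sum_abs)
      also have "\<dots> \<le> (\<Sum>j\<in>{..<k} - {l}. \<bar>x l\<bar> * (1 / (2 * real k)))"
      proof (intro sum_mono)
        fix j assume "j \<in> {..<k} - {l}"
        then have j: "j < k" "j \<noteq> l" by auto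
        show "\<bar>x j * c j\<bar> \<le> \<bar>x l\<bar> * (1 / (2 * real k))"
          unfolding abs_mult using l(3)[OF j(1)] csmall[OF j] by (intro mult_mono) auto
      qed
      also have "\<dots> = real (k - 1) * \<bar>x l\<bar> / (2 * real k)"
        using l(1) by (simp add: card_Diff_singleton)
      also have "\<dots> \<le> real k * \<bar>x l\<bar> / (2 * real k)"
        by (intro divide_right_mono mult_right_mono) auto
      also have "\<dots> = \<bar>x l\<bar> / 2" using k by simp
      finally show ?thesis .
    qed
    have "\<bar>\<Sum>i<D. s i * y i\<bar> \<le> (\<Sum>i<D. \<bar>s i * y i\<bar>)" by (rule sum_abs)
    also have "\<dots> = Ax_l1 D k S x"
      unfolding Ax_l1_def y_def by (intro sum.cong) (auto simp: s_def abs_mult)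
    finally have ax: "\<bar>\<Sum>i<D. s i * y i\<bar> \<le> Ax_l1 D k S x" .
    define R where "R = (\<Sum>j\<in>{..<k} - {l}. x j * c j)"
    have e: "(\<Sum>i<D. s i * y i) = x l + R" using swap split cl by (simp add: R_def)
    have "\<bar>x l\<bar> - \<bar>x l\<bar> / 2 \<le> \<bar>x l + R\<bar>"
      using rest unfolding R_def[symmetric] by arith
    then have "\<bar>x l\<bar> - \<bar>x l\<bar> / 2 \<le> \<bar>\<Sum>i<D. s i * y i\<bar>" using e by simp
    then show ?thesis using ax l(2) by linarith
  qed
  show ?thesis
    unfolding lambda_cn_def
  proof (rule Inf_lower, safe)
    show "(0::ereal) < 2" by simp
    fix x
    show "ereal (linf_k k x) \<le> 2 * ereal (Ax_l1 D k S x)"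
    proof -
      have "(2::ereal) * ereal (Ax_l1 D k S x) = ereal (2 * Ax_l1 D k S x)" by simp
      then show ?thesis using key[of x] by simp
    qed
  qed
qed


lemma prob_good2:
  fixes p :: "'a pmf"
  assumes "finite I" "finite J" "\<And>w. (\<forall>i\<in>I. w \<notin> B i) \<Longrightarrow> (\<forall>j\<in>J. w \<notin> C j) \<Longrightarrow> w \<in> G"
  shows "measure_pmf.prob p G \<ge> 1 - ((\<Sum>i\<in>I. measure_pmf.prob p (B i)) + (\<Sum>j\<in>J. measure_pmf.prob p (C j)))"
proof -
  let ?U = "(\<Union>i\<in>I. B i) \<union> (\<Union>j\<in>J. C j)"
  have "measure_pmf.prob p ?U \<le> measure_pmf.prob p (\<Union>i\<in>I. B i) + measure_pmf.prob p (\<Union>j\<in>J. C j)"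
    by (rule measure_Un_le) auto
  also have "\<dots> \<le> (\<Sum>i\<in>I. measure_pmf.prob p (B i)) + (\<Sum>j\<in>J. measure_pmf.prob p (C j))"
    using assms(1,2) by (intro add_mono measure_pmf.finite_measure_subadditive_finite) auto
  finally have u: "measure_pmf.prob p ?U \<le> \<dots>" .
  have "measure_pmf.prob p (space (measure_pmf p) - ?U) = 1 - measure_pmf.prob p ?U"
    by (rule measure_pmf.prob_compl) auto
  moreover have "measure_pmf.prob p (space (measure_pmf p) - ?U) \<le> measure_pmf.prob p G"
    by (rule measure_pmf.finite_measure_mono) (use assms(3) in auto)
  ultimately show ?thesis using u by linarith
qed

lemma card_Fm: "j < k \<Longrightarrow> real (card (Fm D k w j)) = (\<Sum>i<D. of_bool (w i j))"
proof -
  assume j: "j < k"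
  have "Fm D k w j \<subseteq> {..<D}" using j by (auto simp: Fm_def)
  from sum_ind_card[OF this] have "real (card (Fm D k w j)) = (\<Sum>i<D. of_bool (i \<in> Fm D k w j))" by simp
  also have "\<dots> = (\<Sum>i<D. of_bool (w i j))" by (intro sum.cong) (auto simp: Fm_def j)
  finally show ?thesis .
qed

lemma Z_Fm: "j < k \<Longrightarrow> l < k \<Longrightarrow> (\<Sum>i<D. of_bool (i \<in> Fm D k w j) * (2 * of_bool (i \<in> Fm D k w l) - 1))
   = (\<Sum>i<D. of_bool (w i j) * (2 * of_bool (w i l) - 1) :: real)"
  by (intro sum.cong) (auto simp: Fm_def)

definition B1 :: "nat \<Rightarrow> nat \<Rightarrow> nat \<Rightarrow> (nat \<Rightarrow> nat \<Rightarrow> bool) set" where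
  "B1 D k j = {w. real D / 4 \<le> \<bar>(\<Sum>i<D. of_bool (w i j)) - real D * measure_pmf.expectation (Rk k) (\<lambda>r. of_bool (r j))\<bar>}"

definition B2 :: "nat \<Rightarrow> nat \<Rightarrow> nat \<times> nat \<Rightarrow> (nat \<Rightarrow> nat \<Rightarrow> bool) set" where
  "B2 D k p = (if fst p = snd p then {} else {w. real D / (8 * real k) \<le> \<bar>(\<Sum>i<D. of_bool (w i (fst p)) * (2 * of_bool (w i (snd p)) - 1))
      - real D * measure_pmf.expectation (Rk k) (\<lambda>r. of_bool (r (fst p)) * (2 * of_bool (r (snd p)) - 1))\<bar>})"

lemma B1_bound: "D > 0 \<Longrightarrow> measure_pmf.prob (Bm D k) (B1 D k j) \<le> 2 * exp (- real D / 8)"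
proof -
  assume D: "D > 0"
  have "measure_pmf.prob (Bm D k) (B1 D k j) \<le> 2 * exp (-2 * (real D / 4)\<^sup>2 / (real D * (1 - 0)\<^sup>2))"
    unfolding B1_def by (rule hoeff[of "\<lambda>r. of_bool (r j)" 0 1]) (use D in auto)
  also have "-2 * (real D / 4)\<^sup>2 / (real D * (1 - 0)\<^sup>2) = - real D / 8"
    using D by (simp add: power2_eq_square field_simps)
  finally show ?thesis .
qed

lemma B2_bound: "D > 0 \<Longrightarrow> k > 0 \<Longrightarrow> measure_pmf.prob (Bm D k) (B2 D k p) \<le> 2 * exp (- real D / (128 * (real k)\<^sup>2))"
proof (cases "fst p = snd p")
  case True then show ?thesis by (simp add: B2_def)
next
  case False
  assume D: "D > 0" and k: "k > 0"
  have "measure_pmf.prob (Bm D k) (B2 D k p) \<le> 2 * exp (-2 * (real D / (8 * real k))\<^sup>2 / (real D * (1 - (-1))\<^sup>2))"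
    unfolding B2_def using False
    by (simp only: if_False) (rule hoeff[of "\<lambda>r. of_bool (r (fst p)) * (2 * of_bool (r (snd p)) - 1)" "-1" 1], use D in auto)
  also have "-2 * (real D / (8 * real k))\<^sup>2 / (real D * (1 - (-1))\<^sup>2) = - real D / (128 * (real k)\<^sup>2)"
    using D k by (simp add: power2_eq_square field_simps)
  finally show ?thesis .
qed

lemma part1_bound:
  assumes k: "k > 0" and D: "D > 0"
  shows "measure_pmf.prob (rand_sets D k) {S. kappa D k S \<ge> ereal (1/2 * sqrt (real k))}
     \<ge> 1 - (real k * (2 * exp (- real D / 8)) + 0)"
proof -
  have m: "measure_pmf.prob (Bm D k) {w. kappa D k (Fm D k w) \<ge> ereal (1/2 * sqrt (real k))}
     \<ge> 1 - ((\<Sum>j\<in>{..<k}. measure_pmf.prob (Bm D k) (B1 D k j)) + (\<Sum>j\<in>{}. measure_pmf.prob (Bm D k) (B1 D k j)))"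
  proof (rule prob_good2)
    fix w assume w: "\<forall>j\<in>{..<k}. w \<notin> B1 D k j"
    show "w \<in> {w. kappa D k (Fm D k w) \<ge> ereal (1/2 * sqrt (real k))}"
    proof (unfold mem_Collect_eq, rule detK[OF k D])
      fix j assume j: "j < k"
      have "w \<notin> B1 D k j" using w j by auto
      then have "\<bar>(\<Sum>i<D. of_bool (w i j)) - real D / 2\<bar> < real D / 4"
        by (simp add: B1_def E1[OF j])
      then have h: "real D / 4 \<le> (\<Sum>i<D. of_bool (w i j))" by arith
      have sub: "Fm D k w j \<subseteq> {..<D}" using j by (auto simp: Fm_def)
      show "Fm D k w j \<subseteq> {..<D} \<and> real D / 4 \<le> real (card (Fm D k w j))"
        using sub h card_Fm[OF j, of D w] by linarith
    qed
  qed auto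
  have s1: "(\<Sum>j\<in>{..<k}. measure_pmf.prob (Bm D k) (B1 D k j)) \<le> (\<Sum>j\<in>{..<k}. 2 * exp (- real D / 8))"
    by (intro sum_mono B1_bound D)
  show ?thesis using m s1 by (simp add: prob_rand_sets)
qed

lemma part2_bound:
  assumes k: "k > 0" and D: "D > 0"
  shows "measure_pmf.prob (rand_sets D k) {S. lambda_cn D k S \<le> 2}
     \<ge> 1 - (real k * (2 * exp (- real D / 8)) + (real k)\<^sup>2 * (2 * exp (- real D / (128 * (real k)\<^sup>2))))"
proof -
  have m: "measure_pmf.prob (Bm D k) {w. lambda_cn D k (Fm D k w) \<le> 2}
     \<ge> 1 - ((\<Sum>j\<in>{..<k}. measure_pmf.prob (Bm D k) (B1 D k j)) + (\<Sum>p\<in>{..<k}\<times>{..<k}. measure_pmf.prob (Bm D k) (B2 D k p)))"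
  proof (rule prob_good2)
    fix w assume w: "\<forall>j\<in>{..<k}. w \<notin> B1 D k j" and w2: "\<forall>p\<in>{..<k}\<times>{..<k}. w \<notin> B2 D k p"
    show "w \<in> {w. lambda_cn D k (Fm D k w) \<le> 2}"
    proof (unfold mem_Collect_eq, rule detL[OF k D])
      fix j assume j: "j < k"
      have "w \<notin> B1 D k j" using w j by auto
      then have "\<bar>(\<Sum>i<D. of_bool (w i j)) - real D / 2\<bar> < real D / 4"
        by (simp add: B1_def E1[OF j])
      then have h: "real D / 4 \<le> (\<Sum>i<D. of_bool (w i j))" by arith
      have sub: "Fm D k w j \<subseteq> {..<D}" using j by (auto simp: Fm_def)
      show "Fm D k w j \<subseteq> {..<D} \<and> real D / 4 \<le> real (card (Fm D k w j))"
        using sub h card_Fm[OF j, of D w] by linarith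
    next
      fix j l assume jl: "j < k" "l < k" "j \<noteq> l"
      have "w \<notin> B2 D k (j, l)" using w2 jl by auto
      then have "\<bar>\<Sum>i<D. of_bool (w i j) * (2 * of_bool (w i l) - 1) :: real\<bar> < real D / (8 * real k)"
        using jl by (simp add: B2_def E2[OF jl])
      then show "\<bar>\<Sum>i<D. of_bool (i \<in> Fm D k w j) * (2 * of_bool (i \<in> Fm D k w l) - 1)\<bar> \<le> real D / (8 * real k)"
        using Z_Fm[OF jl(1,2), of D w] by simp
    qed
  qed auto
  have s1: "(\<Sum>j\<in>{..<k}. measure_pmf.prob (Bm D k) (B1 D k j)) \<le> (\<Sum>j\<in>{..<k}. 2 * exp (- real D / 8))"
    by (intro sum_mono B1_bound D)
  have s2: "(\<Sum>p\<in>{..<k}\<times>{..<k}. measure_pmf.prob (Bm D k) (B2 D k p)) \<le> (\<Sum>p\<in>{..<k}\<times>{..<k}. 2 * exp (- real D / (128 * (real k)\<^sup>2)))"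
    by (intro sum_mono B2_bound D k)
  show ?thesis using m s1 s2 by (simp add: prob_rand_sets power2_eq_square)
qed


lemma exp_neg_nln: "x > 0 \<Longrightarrow> exp (- (real n * ln x)) = 1 / x ^ n"
  by (simp add: exp_minus ln_realpow[symmetric] inverse_eq_divide)

lemma sandw:
  fixes g :: "nat \<Rightarrow> real"
  assumes "eventually (\<lambda>k. 1 - 4 / real k \<le> g k) sequentially" "\<And>k. g k \<le> 1"
  shows "g \<longlonglongrightarrow> 1"
proof (rule tendsto_sandwich[of "\<lambda>k. 1 - 4 / real k" g sequentially "\<lambda>k. 1"])
  show "(\<lambda>k. 1 - 4 / real k) \<longlonglongrightarrow> 1"
    using tendsto_diff[OF tendsto_const[of "1::real"] lim_const_over_n[of "4::real"]] by simp
qed (use assms in auto)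

lemma step1:
  assumes k: "k \<ge> 2" and r: "16 \<le> real D / (real k * ln (real k))"
  shows "1 - 4 / real k \<le> measure_pmf.prob (rand_sets D k) {S. kappa D k S \<ge> ereal (1/2 * sqrt (real k))}"
proof -
  have lk: "ln (real k) > 0" using k by simp
  have kl: "real k * ln (real k) > 0" using k lk by simp
  have Dge: "16 * (real k * ln (real k)) \<le> real D" using r kl by (simp add: pos_le_divide_eq)
  have "16 * ln (real k) \<le> 16 * (real k * ln (real k))" using k lk by simp
  with Dge have D16: "16 * ln (real k) \<le> real D" by linarith
  have Dpos: "D > 0" using Dge kl by (smt (verit) of_nat_0_less_iff mult_pos_pos)
  have "exp (- real D / 8) \<le> exp (- (real 2 * ln (real k)))" using D16 by simp
  also have "\<dots> = 1 / (real k)^2" using k by (intro exp_neg_nln) auto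
  finally have e: "exp (- real D / 8) \<le> 1 / (real k)^2" .
  have "real k * (2 * exp (- real D / 8)) \<le> real k * (2 * (1 / (real k)^2))"
    using e by (intro mult_left_mono) auto
  also have "\<dots> = 2 / real k" using k by (simp add: power2_eq_square)
  finally have b0: "real k * (2 * exp (- real D / 8)) \<le> 2 / real k" .
  have "2 / real k \<le> 4 / real k" by (intro divide_right_mono) auto
  with b0 have b: "real k * (2 * exp (- real D / 8)) + 0 \<le> 4 / real k" by linarith
  have "1 - (real k * (2 * exp (- real D / 8)) + 0) \<le> measure_pmf.prob (rand_sets D k) {S. kappa D k S \<ge> ereal (1/2 * sqrt (real k))}"
    using part1_bound[of k D] k Dpos by simp
  then show ?thesis using b by linarith
qed

lemma step2:
  assumes k: "k \<ge> 2" and r: "512 \<le> real D / ((real k)^2 * ln (real k))"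
  shows "1 - 4 / real k \<le> measure_pmf.prob (rand_sets D k) {S. lambda_cn D k S \<le> 2}"
proof -
  have lk: "ln (real k) > 0" using k by simp
  have kl: "(real k)^2 * ln (real k) > 0" using k lk by simp
  have Dge: "512 * ((real k)^2 * ln (real k)) \<le> real D" using r kl by (simp add: pos_le_divide_eq)
  have k2: "(real k)^2 \<ge> 1" using k by (simp add: one_le_power)
  have "1 * ln (real k) \<le> (real k)^2 * ln (real k)" using k2 lk by (intro mult_right_mono) auto
  then have "16 * ln (real k) \<le> 512 * ((real k)^2 * ln (real k))" using lk by linarith
  with Dge have D16: "16 * ln (real k) \<le> real D" by linarith
  have Dpos: "D > 0" using Dge kl by (smt (verit) of_nat_0_less_iff mult_pos_pos)
  have "exp (- real D / 8) \<le> exp (- (real 2 * ln (real k)))" using D16 by simp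
  also have "\<dots> = 1 / (real k)^2" using k by (intro exp_neg_nln) auto
  finally have e: "exp (- real D / 8) \<le> 1 / (real k)^2" .
  have "real k * (2 * exp (- real D / 8)) \<le> real k * (2 * (1 / (real k)^2))"
    using e by (intro mult_left_mono) auto
  also have "\<dots> = 2 / real k" using k by (simp add: power2_eq_square)
  finally have b1: "real k * (2 * exp (- real D / 8)) \<le> 2 / real k" .
  have kk: "128 * (real k)^2 > 0" using k by simp
  have "4 * ln (real k) \<le> real D / (128 * (real k)^2)"
    using Dge kk by (simp add: pos_le_divide_eq mult_ac)
  then have "exp (- real D / (128 * (real k)\<^sup>2)) \<le> exp (- (real 4 * ln (real k)))" by simp
  also have "\<dots> = 1 / (real k)^4" using k by (intro exp_neg_nln) auto
  finally have e2: "exp (- real D / (128 * (real k)\<^sup>2)) \<le> 1 / (real k)^4" .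
  have "(real k)\<^sup>2 * (2 * exp (- real D / (128 * (real k)\<^sup>2))) \<le> (real k)\<^sup>2 * (2 * (1 / (real k)^4))"
    using e2 by (intro mult_left_mono) auto
  also have "\<dots> = 2 / (real k)^2" using k by (simp add: power2_eq_square power4_eq_xxxx)
  also have "\<dots> \<le> 2 / real k" using k
    by (intro divide_left_mono) (auto simp: power2_eq_square)
  finally have b2: "(real k)\<^sup>2 * (2 * exp (- real D / (128 * (real k)\<^sup>2))) \<le> 2 / real k" .
  have "1 - (real k * (2 * exp (- real D / 8)) + (real k)\<^sup>2 * (2 * exp (- real D / (128 * (real k)\<^sup>2))))
     \<le> measure_pmf.prob (rand_sets D k) {S. lambda_cn D k S \<le> 2}"
    using part2_bound[of k D] k Dpos by simp
  then show ?thesis using b1 b2 by linarith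
qed

theorem lemma6p4:
  fixes D :: "nat \<Rightarrow> nat"
  shows "(filterlim (\<lambda>k. real (D k) / (real k * ln (real k))) at_top sequentially \<longrightarrow>
           (\<exists>c>0. (\<lambda>k. measure_pmf.prob (rand_sets (D k) k)
                      {S. kappa (D k) k S \<ge> ereal (c * sqrt (real k))}) \<longlonglongrightarrow> 1))
       \<and> (filterlim (\<lambda>k. real (D k) / (real k ^ 2 * ln (real k))) at_top sequentially \<longrightarrow>
           (\<lambda>k. measure_pmf.prob (rand_sets (D k) k)
                      {S. lambda_cn (D k) k S \<le> 2}) \<longlonglongrightarrow> 1)"
proof (intro conjI impI)
  assume h: "filterlim (\<lambda>k. real (D k) / (real k * ln (real k))) at_top sequentially"
  have ev: "eventually (\<lambda>k. 16 \<le> real (D k) / (real k * ln (real k))) sequentially"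
    using h unfolding filterlim_at_top by blast
  have "(\<lambda>k. measure_pmf.prob (rand_sets (D k) k)
                      {S. kappa (D k) k S \<ge> ereal (1/2 * sqrt (real k))}) \<longlonglongrightarrow> 1"
  proof (rule sandw)
    show "eventually (\<lambda>k. 1 - 4 / real k \<le> measure_pmf.prob (rand_sets (D k) k)
                      {S. kappa (D k) k S \<ge> ereal (1/2 * sqrt (real k))}) sequentially"
      using ev eventually_ge_at_top[of 2] by eventually_elim (rule step1)
  qed simp
  then show "\<exists>c>0. (\<lambda>k. measure_pmf.prob (rand_sets (D k) k)
                      {S. kappa (D k) k S \<ge> ereal (c * sqrt (real k))}) \<longlonglongrightarrow> 1"
    by (intro exI[of _ "1/2"]) auto
next
  assume h: "filterlim (\<lambda>k. real (D k) / (real k ^ 2 * ln (real k))) at_top sequentially"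
  have ev: "eventually (\<lambda>k. 512 \<le> real (D k) / (real k ^ 2 * ln (real k))) sequentially"
    using h unfolding filterlim_at_top by blast
  show "(\<lambda>k. measure_pmf.prob (rand_sets (D k) k) {S. lambda_cn (D k) k S \<le> 2}) \<longlonglongrightarrow> 1"
  proof (rule sandw)
    show "eventually (\<lambda>k. 1 - 4 / real k \<le> measure_pmf.prob (rand_sets (D k) k)
                      {S. lambda_cn (D k) k S \<le> 2}) sequentially"
      using ev eventually_ge_at_top[of 2] by eventually_elim (rule step2)
  qed simp
qed

end
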